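(* Let $q$ be a prime power, $\mathbb{F}:=\mathbb{F}_q$, $\alpha\in\mathbb{F}$ with $\mathrm{ord}(\alpha)=n$, $0\leq\delta\leq n-1$, $A:=\mathbb{F}[x]/\langle x^n-1\rangle$, and let $\sigma\in\mathrm{Aut}_{\mathbb{F}}(A)$ be defined by $\sigma(x)=\alpha x$. Let $\mathcal{C}:=\mathrm{im}\,G\subseteq\mathbb{F}[z]^n$ where $G:=\sum_{\nu=0}^{\delta}z^\nu\begin{pmatrix}1&\alpha^\nu&\alpha^{2\nu}&\ldots&\alpha^{(n-1)\nu}\end{pmatrix}$. Then: (a) $\mathfrak{p}(\mathcal{C})$ is the left ideal in $A[z;\sigma]$ generated by the element \[ \sum_{\nu=0}^{\delta}z^\nu\sum_{i=0}^{n-1}\alpha^{\nu i}x^i=\prod_{i=1}^{n-1}(x-\alpha^i)\sum_{\nu=0}^{\delta}z^\nu; \] (b) $\mathfrak{p}(\mathcal{C})$ is the left ideal in $A[z;\sigma]$ generated by the element \[ \varepsilon_0\sum_{\nu=0}^{\delta}z^\nu=\varepsilon_0(1+z\varepsilon_{n-1})(1+z\varepsilon_{n-2})\cdots(1+z\varepsilon_{n-\delta}) \] (the product being empty, i.e. equal to $1$, when $\delta=0$).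
   Context: $\mathrm{ord}(\alpha)$ is the multiplicative order of $\alpha$. For $\sigma\in\mathrm{Aut}_{\mathbb{F}}(A)$, the skew polynomial ring $A[z;\sigma]$ is the set of polynomials $\sum_\nu z^\nu a_\nu$ ($a_\nu\in A$) with usual addition and multiplication determined by associativity, distributivity, the multiplication of $A$, and the rule $az=z\sigma(a)$ for $a\in A$. The map $\mathfrak{p}:\mathbb{F}[z]^n\to A[z;\sigma]$ is $\sum_\nu z^\nu v_\nu\mapsto\sum_\nu z^\nu\sum_{i=0}^{n-1}v_{\nu,i}x^i$ for $v_\nu=(v_{\nu,0},\ldots,v_{\nu,n-1})\in\mathbb{F}^n$. For $k=0,\ldots,n-1$, $\varepsilon_k\in A$ is the primitive idempotent corresponding to the factor $x-\alpha^k$ of $x^n-1=\prod_{i=0}^{n-1}(x-\alpha^i)$, i.e. the unique element of $A$ with $\varepsilon_k(\alpha^i)=\delta_{k,i}$ for $i=0,\ldots,n-1$ (evaluation of a representative). *)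

theory Defs
  imports "HOL-Computational_Algebra.Polynomial"
begin

definition mult_ord :: "'a::field \<Rightarrow> nat" where
  "mult_ord a = (if \<exists>k>0. a ^ k = 1 then (LEAST k. 0 < k \<and> a ^ k = 1) else 0)"

text \<open>The ring A = F[x]/<x^n - 1>, elements represented by their reduced
  representatives (polynomials in x of degree < n).\<close>
definition xn1 :: "nat \<Rightarrow> 'a::field poly" where
  "xn1 n = monom 1 n - 1"

definition A_red :: "nat \<Rightarrow> 'a::field poly \<Rightarrow> 'a poly" where
  "A_red n p = p mod xn1 n"

definition A_carrier :: "nat \<Rightarrow> 'a::field poly set" where
  "A_carrier n = {p. A_red n p = p}"

definition A_mult :: "nat \<Rightarrow> 'a::field poly \<Rightarrow> 'a poly \<Rightarrow> 'a poly" where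
  "A_mult n a b = A_red n (a * b)"

text \<open>The automorphism sigma of A with sigma(x) = alpha x, i.e. sigma(a)(x) = a(alpha x).\<close>
definition A_sigma :: "nat \<Rightarrow> 'a::field \<Rightarrow> 'a poly \<Rightarrow> 'a poly" where
  "A_sigma n \<alpha> a = A_red n (pcompose a [:0, \<alpha>:])"

text \<open>Skew polynomial ring A[z;sigma]: an element \<Sum> z^nu a_nu is represented by
  the polynomial (in z) whose nu-th coefficient is a_nu \<in> A.  Multiplication is
  determined by a z = z sigma(a), i.e. (z^mu a)(z^nu b) = z^(mu+nu) sigma^nu(a) b.\<close>
definition skew_carrier :: "nat \<Rightarrow> 'a::field poly poly set" where
  "skew_carrier n = {f. \<forall>k. coeff f k \<in> A_carrier n}"

definition skew_mult :: "nat \<Rightarrow> 'a::field \<Rightarrow> 'a poly poly \<Rightarrow> 'a poly poly \<Rightarrow> 'a poly poly" where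
  "skew_mult n \<alpha> f g =
     (\<Sum>\<mu>\<le>degree f. \<Sum>\<nu>\<le>degree g.
        monom (A_mult n ((A_sigma n \<alpha> ^^ \<nu>) (coeff f \<mu>)) (coeff g \<nu>)) (\<mu> + \<nu>))"

definition skew_left_ideal :: "nat \<Rightarrow> 'a::field \<Rightarrow> 'a poly poly \<Rightarrow> 'a poly poly set" where
  "skew_left_ideal n \<alpha> g = {skew_mult n \<alpha> f g | f. f \<in> skew_carrier n}"

text \<open>The map p : F[z]^n \<rightarrow> A[z;sigma]; a vector in F[z]^n is a function
  v :: nat \<Rightarrow> 'a poly, of which only the entries v 0, ..., v (n-1) are used.\<close>
definition pmap :: "nat \<Rightarrow> (nat \<Rightarrow> 'a::field poly) \<Rightarrow> 'a poly poly" where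
  "pmap n v = (\<Sum>i<n. \<Sum>\<nu>\<le>degree (v i). monom (monom (coeff (v i) \<nu>) i) \<nu>)"

definition G_entry :: "'a::field \<Rightarrow> nat \<Rightarrow> nat \<Rightarrow> 'a poly" where
  "G_entry \<alpha> \<delta> i = (\<Sum>\<nu>\<le>\<delta>. monom (\<alpha> ^ (\<nu> * i)) \<nu>)"

definition code_C :: "nat \<Rightarrow> 'a::field \<Rightarrow> nat \<Rightarrow> (nat \<Rightarrow> 'a poly) set" where
  "code_C n \<alpha> \<delta> = {(\<lambda>i. if i < n then u * G_entry \<alpha> \<delta> i else 0) | u. True}"

definition eps :: "nat \<Rightarrow> 'a::field \<Rightarrow> nat \<Rightarrow> 'a poly" where
  "eps n \<alpha> k = (THE e. e \<in> A_carrier n \<and>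
                       (\<forall>i<n. poly e (\<alpha> ^ i) = (if i = k then 1 else 0)))"

definition zsum :: "nat \<Rightarrow> 'a::field poly poly" where
  "zsum \<delta> = (\<Sum>\<nu>\<le>\<delta>. monom 1 \<nu>)"

end

theory Submission
  imports Defs
begin


context
  fixes \<alpha> :: "'a::{field,finite}" and n :: nat
  assumes a0: "\<alpha> \<noteq> 0" and ordn: "mult_ord \<alpha> = n"
begin

lemma ex_pow1: "\<exists>k>0. \<alpha> ^ k = 1"
proof -
  have "\<not> inj (\<lambda>k::nat. \<alpha> ^ k)"
  proof
    assume "inj (\<lambda>k::nat. \<alpha> ^ k)"
    hence "finite (UNIV :: nat set)"
      using finite_imageD[of "\<lambda>k::nat. \<alpha> ^ k" UNIV] by (simp add: finite_subset)
    thus False by simp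
  qed
  then obtain i j :: nat where ij: "\<alpha> ^ i = \<alpha> ^ j" "i \<noteq> j" unfolding inj_def by blast
  have "\<exists>i j::nat. i < j \<and> \<alpha> ^ i = \<alpha> ^ j"
    using ij by (metis linorder_neqE_nat)
  then obtain i j :: nat where ij: "i < j" "\<alpha> ^ i = \<alpha> ^ j" by blast
  have "\<alpha> ^ j = \<alpha> ^ i * \<alpha> ^ (j - i)" using ij(1) by (simp flip: power_add)
  hence "\<alpha> ^ (j - i) = 1" using ij(2) a0 by simp
  thus ?thesis using ij(1) by (intro exI[of _ "j - i"]) auto
qed

lemma n_pos: "n > 0" and pow_n: "\<alpha> ^ n = 1" and pow_ne1: "0 < k \<Longrightarrow> k < n \<Longrightarrow> \<alpha> ^ k \<noteq> 1"
proof -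
  have nd: "n = (LEAST k. 0 < k \<and> \<alpha> ^ k = 1)" using ordn ex_pow1 unfolding mult_ord_def by simp
  from LeastI_ex[OF ex_pow1] show "n > 0" "\<alpha> ^ n = 1" unfolding nd by auto
  show "0 < k \<Longrightarrow> k < n \<Longrightarrow> \<alpha> ^ k \<noteq> 1" unfolding nd using not_less_Least by blast
qed

lemma pow_mod: "\<alpha> ^ m = \<alpha> ^ (m mod n)"
proof -
  have "\<alpha> ^ m = \<alpha> ^ (n * (m div n) + m mod n)" by (metis div_mult_mod_eq mult.commute)
  also have "\<dots> = (\<alpha> ^ n) ^ (m div n) * \<alpha> ^ (m mod n)" by (simp only: power_add power_mult)
  also have "\<dots> = \<alpha> ^ (m mod n)" by (simp add: pow_n)
  finally show ?thesis .
qed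

lemma pow_eq1_iff: "\<alpha> ^ m = 1 \<longleftrightarrow> m mod n = 0"
  using pow_mod[of m] pow_ne1[of "m mod n"] n_pos by (cases "m mod n = 0") auto

lemma pow_inj: "i < n \<Longrightarrow> j < n \<Longrightarrow> \<alpha> ^ i = \<alpha> ^ j \<Longrightarrow> i = j"
proof (induction i j rule: linorder_wlog)
  case (le i j)
  have "\<alpha> ^ j = \<alpha> ^ i * \<alpha> ^ (j - i)" using le(1) by (simp flip: power_add)
  hence "\<alpha> ^ (j - i) = 1" using le a0 by simp
  thus ?case using pow_ne1[of "j - i"] le by (cases "i = j") auto
next
  case (sym a b) thus ?case by auto
qed

lemma powpow_n: "(\<alpha> ^ j) ^ n = 1"
  by (metis pow_n power_mult mult.commute power_one)

lemma degree_xn1: "degree (xn1 n :: 'a poly) = n"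
proof -
  have "degree (monom (1::'a) n + (- 1)) = n"
    using n_pos by (subst degree_add_eq_left) (auto simp: degree_monom_eq)
  thus ?thesis unfolding xn1_def by simp
qed

lemma xn1_ne0: "xn1 n \<noteq> (0 :: 'a poly)"
  using degree_xn1 n_pos by auto

lemma poly_xn1: "poly (xn1 n) (\<alpha> ^ j) = 0"
  unfolding xn1_def by (simp add: poly_monom powpow_n)

lemma poly_A_red: "poly (A_red n (p::'a poly)) (\<alpha> ^ j) = poly p (\<alpha> ^ j)"
proof -
  have "poly p (\<alpha> ^ j) = poly ((p div xn1 n) * xn1 n + A_red n p) (\<alpha> ^ j)"
    by (simp add: A_red_def)
  also have "\<dots> = poly (p div xn1 n) (\<alpha> ^ j) * poly (xn1 n) (\<alpha> ^ j) + poly (A_red n p) (\<alpha> ^ j)"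
    by (simp only: poly_add poly_mult)
  finally show ?thesis by (simp add: poly_xn1)
qed

lemma degree_A_red: "degree (A_red n (p::'a poly)) < n"
proof -
  have "p mod xn1 n = 0 \<or> degree (p mod xn1 n) < n"
    using degree_mod_less[OF xn1_ne0, of p] degree_xn1 by simp
  thus ?thesis using n_pos unfolding A_red_def by (cases "p mod xn1 n = 0") simp_all
qed

lemma A_red_id: "degree (p::'a poly) < n \<Longrightarrow> A_red n p = p"
  unfolding A_red_def by (rule mod_poly_less) (simp add: degree_xn1)

lemma A_carrier_iff: "(p::'a poly) \<in> A_carrier n \<longleftrightarrow> degree p < n"
proof
  assume "p \<in> A_carrier n" hence "A_red n p = p" by (simp add: A_carrier_def)
  thus "degree p < n" using degree_A_red[of p] by simp
next
  assume "degree p < n" thus "p \<in> A_carrier n" by (simp add: A_carrier_def A_red_id)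
qed

lemma uniq0:
  assumes "degree (p::'a poly) < n" "\<And>j. j < n \<Longrightarrow> poly p (\<alpha> ^ j) = 0"
  shows "p = 0"
proof (rule ccontr)
  assume p0: "p \<noteq> 0"
  have "(\<lambda>j. \<alpha> ^ j) ` {..<n} \<subseteq> {x. poly p x = 0}" using assms(2) by auto
  hence "card ((\<lambda>j. \<alpha> ^ j) ` {..<n}) \<le> card {x. poly p x = 0}"
    by (intro card_mono poly_roots_finite p0)
  moreover have "card ((\<lambda>j. \<alpha> ^ j) ` {..<n}) = n"
    by (subst card_image) (auto intro!: inj_onI pow_inj)
  ultimately show False using card_poly_roots_bound[OF p0] assms(1) by linarith
qed

lemma uniq:
  assumes "degree (p::'a poly) < n" "degree q < n" "\<And>j. j < n \<Longrightarrow> poly p (\<alpha> ^ j) = poly q (\<alpha> ^ j)"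
  shows "p = q"
  using uniq0[of "p - q"] assms degree_diff_less by force

lemma poly_sigma: "poly ((A_sigma n \<alpha> ^^ \<nu>) a) (\<alpha> ^ j) = poly a (\<alpha> ^ (j + \<nu>))"
proof (induction \<nu> arbitrary: j)
  case 0 thus ?case by simp
next
  case (Suc \<nu>)
  have "poly ((A_sigma n \<alpha> ^^ Suc \<nu>) a) (\<alpha> ^ j) = poly ((A_sigma n \<alpha> ^^ \<nu>) a) (\<alpha> ^ (Suc j))"
    by (simp add: A_sigma_def poly_A_red poly_pcompose mult.commute)
  also have "\<dots> = poly a (\<alpha> ^ (Suc j + \<nu>))" by (rule Suc.IH)
  finally show ?case by (simp only: add_Suc_right add_Suc)
qed

lemma poly_A_mult: "poly (A_mult n a b) (\<alpha> ^ j) = poly a (\<alpha> ^ j) * poly b (\<alpha> ^ j)"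
  by (simp add: A_mult_def poly_A_red)

end



lemma A_red0[simp]: "A_red n 0 = 0" by (simp add: A_red_def)
lemma A_mult0[simp]: "A_mult n a 0 = 0" "A_mult n 0 a = 0" by (simp_all add: A_mult_def)
lemma sigma0[simp]: "(A_sigma n \<alpha> ^^ \<nu>) 0 = 0"
  by (induction \<nu>) (simp_all add: A_sigma_def)

lemma coeff_skew_mult:
  "coeff (skew_mult n \<alpha> f g) k = (\<Sum>\<nu>\<le>k. A_mult n ((A_sigma n \<alpha> ^^ \<nu>) (coeff f (k-\<nu>))) (coeff g \<nu>))"
proof -
  define T where "T = (\<lambda>\<mu> \<nu>. A_mult n ((A_sigma n \<alpha> ^^ \<nu>) (coeff f \<mu>)) (coeff g \<nu>))"
  define D where "D = degree f + degree g + k"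
  have T0: "T \<mu> \<nu> = 0" if "\<mu> > degree f" for \<mu> \<nu>
    using that by (auto simp: T_def coeff_eq_0)
  have T0': "T \<mu> \<nu> = 0" if "\<nu> > degree g" for \<mu> \<nu>
    using that by (auto simp: T_def coeff_eq_0)
  have "coeff (skew_mult n \<alpha> f g) k = (\<Sum>\<mu>\<le>degree f. \<Sum>\<nu>\<le>degree g. if \<mu> + \<nu> = k then T \<mu> \<nu> else 0)"
    unfolding skew_mult_def T_def by (simp add: coeff_sum coeff_monom)
  also have "\<dots> = (\<Sum>\<mu>\<le>D. \<Sum>\<nu>\<le>degree g. if \<mu> + \<nu> = k then T \<mu> \<nu> else 0)"
    by (rule sum.mono_neutral_left) (auto simp: D_def T0 intro!: sum.neutral)
  also have "\<dots> = (\<Sum>\<mu>\<le>D. \<Sum>\<nu>\<le>D. if \<mu> + \<nu> = k then T \<mu> \<nu> else 0)"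
    by (intro sum.cong refl sum.mono_neutral_left) (auto simp: D_def T0')
  also have "\<dots> = (\<Sum>\<nu>\<le>D. \<Sum>\<mu>\<le>D. if \<mu> + \<nu> = k then T \<mu> \<nu> else 0)"
    by (rule sum.swap)
  also have "\<dots> = (\<Sum>\<nu>\<le>D. if \<nu> \<le> k then T (k - \<nu>) \<nu> else 0)"
  proof (intro sum.cong refl)
    fix \<nu> assume "\<nu> \<in> {..D}"
    have "(\<Sum>\<mu>\<le>D. if \<mu> + \<nu> = k then T \<mu> \<nu> else 0) = (\<Sum>\<mu>\<le>D. if \<mu> = k - \<nu> \<and> \<nu> \<le> k then T \<mu> \<nu> else 0)"
      by (intro sum.cong refl) auto
    also have "\<dots> = (if \<nu> \<le> k then T (k - \<nu>) \<nu> else 0)"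
      by (cases "\<nu> \<le> k") (auto simp: D_def)
    finally show "(\<Sum>\<mu>\<le>D. if \<mu> + \<nu> = k then T \<mu> \<nu> else 0) = (if \<nu> \<le> k then T (k - \<nu>) \<nu> else 0)" .
  qed
  also have "\<dots> = (\<Sum>\<nu>\<in>{x\<in>{..D}. x \<le> k}. T (k - \<nu>) \<nu>)"
    by (rule sum.inter_filter[symmetric]) simp
  also have "{x\<in>{..D}. x \<le> k} = {..k}" by (auto simp: D_def)
  finally show ?thesis by (simp add: T_def)
qed

context
  fixes \<alpha> :: "'a::{field,finite}" and n :: nat
  assumes a0: "\<alpha> \<noteq> 0" and ordn: "mult_ord \<alpha> = n"
begin

lemma skew_mult_carrier: "skew_mult n \<alpha> f g \<in> skew_carrier n"
  unfolding skew_carrier_def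
  by (auto simp: coeff_skew_mult A_carrier_iff[OF a0 ordn] A_mult_def
           intro!: degree_sum_less degree_A_red[OF a0 ordn] n_pos[OF a0 ordn])

lemma skew_eqI:
  assumes "F \<in> skew_carrier n" "G \<in> skew_carrier n"
    "\<And>k j. j < n \<Longrightarrow> poly (coeff F k) (\<alpha> ^ j) = poly (coeff G k) (\<alpha> ^ j)"
  shows "F = G"
proof (rule poly_eqI)
  fix k
  show "coeff F k = coeff G k"
    using assms by (intro uniq[OF a0 ordn]) (auto simp: skew_carrier_def A_carrier_iff[OF a0 ordn])
qed

lemma poly_coeff_skew_mult:
  "poly (coeff (skew_mult n \<alpha> f g) k) (\<alpha> ^ j) =
     (\<Sum>\<nu>\<le>k. poly (coeff f (k - \<nu>)) (\<alpha> ^ (j + \<nu>)) * poly (coeff g \<nu>) (\<alpha> ^ j))"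
  by (simp add: coeff_skew_mult poly_sum poly_A_mult[OF a0 ordn] poly_sigma[OF a0 ordn])

lemma key:
  assumes "\<And>\<nu> j. \<alpha> ^ (j + \<nu>) \<noteq> 1 \<Longrightarrow> poly (coeff G \<nu>) (\<alpha> ^ j) = 0"
  shows "poly (coeff (skew_mult n \<alpha> f G) k) (\<alpha> ^ j) =
     (\<Sum>\<nu>\<le>k. poly (coeff f (k - \<nu>)) 1 * poly (coeff G \<nu>) (\<alpha> ^ j))"
  unfolding poly_coeff_skew_mult
proof (intro sum.cong refl)
  fix \<nu>
  show "poly (coeff f (k - \<nu>)) (\<alpha> ^ (j + \<nu>)) * poly (coeff G \<nu>) (\<alpha> ^ j) =
        poly (coeff f (k - \<nu>)) 1 * poly (coeff G \<nu>) (\<alpha> ^ j)"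
    using assms[of j \<nu>] by (cases "\<alpha> ^ (j + \<nu>) = 1") auto
qed

end



context
  fixes \<alpha> :: "'a::{field,finite}" and n :: nat
  assumes a0: "\<alpha> \<noteq> 0" and ordn: "mult_ord \<alpha> = n"
begin

lemma degree_diff_monic:
  fixes p q :: "'a poly"
  assumes "degree p = n" "degree q = n" "lead_coeff p = lead_coeff q"
  shows "degree (p - q) < n"
proof -
  have "degree (p - q) \<le> n - 1"
  proof (rule degree_le, intro allI impI)
    fix i assume "i > n - 1"
    hence "i = n \<or> i > n" by auto
    thus "coeff (p - q) i = 0" using assms by (auto simp: coeff_eq_0)
  qed
  thus ?thesis using n_pos[OF a0 ordn] by linarith
qed

lemma prod_all: "(\<Prod>i<n. [:- (\<alpha> ^ i), 1:]) = xn1 n"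
proof -
  let ?Q = "(\<Prod>i<n. [:- (\<alpha> ^ i), 1:])"
  have dQ: "degree ?Q = n"
    by (subst degree_prod_eq_sum_degree) auto
  have lQ: "lead_coeff ?Q = 1" by (simp add: lead_coeff_prod)
  have lX: "lead_coeff (xn1 n :: 'a poly) = 1"
    using degree_xn1[OF a0 ordn] n_pos[OF a0 ordn] by (simp add: xn1_def)
  have "?Q - xn1 n = 0"
  proof (rule uniq0[OF a0 ordn])
    show "degree (?Q - xn1 n) < n"
      by (rule degree_diff_monic) (use dQ lQ lX degree_xn1[OF a0 ordn] in auto)
    fix j assume "j < n"
    hence "poly ?Q (\<alpha> ^ j) = 0" by (auto simp: poly_prod)
    thus "poly (?Q - xn1 n) (\<alpha> ^ j) = 0" by (simp add: poly_xn1[OF a0 ordn])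
  qed
  thus ?thesis by simp
qed

lemma P_eq: "(\<Prod>i\<in>{1..<n}. [:- (\<alpha> ^ i), 1:]) = (\<Sum>i<n. [:0, 1:] ^ i)"
proof -
  have "{..<n} = insert 0 {1..<n}" using n_pos[OF a0 ordn] by auto
  hence "(\<Prod>i<n. [:- (\<alpha> ^ i), 1:]) = [:-1, 1:] * (\<Prod>i\<in>{1..<n}. [:- (\<alpha> ^ i), 1:])"
    by (simp add: prod.insert)
  moreover have "xn1 n = ([:0, 1:] - 1) * (\<Sum>i<n. [:0, 1:] ^ i :: 'a poly)"
    unfolding xn1_def monom_altdef by (simp add: power_diff_1_eq)
  moreover have "[:0, 1:] - 1 = ([:-1, 1:] :: 'a poly)" by (simp add: one_pCons)
  ultimately have "[:-1, 1:] * (\<Prod>i\<in>{1..<n}. [:- (\<alpha> ^ i), 1:]) = [:-1, 1:] * (\<Sum>i<n. [:0, 1:] ^ i)"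
    using prod_all by simp
  moreover have "[:-1, 1:] \<noteq> (0::'a poly)" by simp
  ultimately show ?thesis using mult_left_cancel by blast
qed

lemma poly_P: "poly (\<Prod>i\<in>{1..<n}. [:- (\<alpha> ^ i), 1:]) y = (\<Sum>i<n. y ^ i)"
  unfolding P_eq by (simp add: poly_sum)

lemma degree_P: "degree (\<Prod>i\<in>{1..<n}. [:- (\<alpha> ^ i), 1:]) < n"
  unfolding P_eq using n_pos[OF a0 ordn]
  by (intro degree_sum_less) (auto simp: degree_linear_power[of 0, simplified])

lemma geom0: "\<alpha> ^ m \<noteq> 1 \<Longrightarrow> (\<Sum>i<n. (\<alpha> ^ m) ^ i) = 0"
proof -
  assume "\<alpha> ^ m \<noteq> 1"
  have "(\<alpha> ^ m) ^ n - 1 = (\<alpha> ^ m - 1) * (\<Sum>i<n. (\<alpha> ^ m) ^ i)" by (rule power_diff_1_eq)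
  moreover have "(\<alpha> ^ m) ^ n = 1" by (rule powpow_n[OF a0 ordn])
  ultimately show ?thesis using \<open>\<alpha> ^ m \<noteq> 1\<close> by simp
qed

lemma geom1: "(\<Sum>i<n. (1::'a) ^ i) \<noteq> 0"
proof -
  have "(\<Sum>i<n. (1::'a) ^ i) = poly (\<Prod>i\<in>{1..<n}. [:- (\<alpha> ^ i), 1:]) 1" by (rule poly_P[symmetric])
  also have "\<dots> = (\<Prod>i\<in>{1..<n}. 1 - \<alpha> ^ i)" by (simp add: poly_prod)
  also have "\<dots> \<noteq> 0" using pow_ne1[OF a0 ordn] by auto
  finally show ?thesis .
qed

lemma eps_ex: 
  assumes "k < n"
  shows "\<exists>e. e \<in> A_carrier n \<and> (\<forall>i<n. poly e (\<alpha> ^ i) = (if i = k then 1 else (0::'a)))"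
proof -
  define S where "S = {..<n} - {k}"
  define c where "c = (\<Prod>i\<in>S. \<alpha> ^ k - \<alpha> ^ i)"
  define L where "L = smult (inverse c) (\<Prod>i\<in>S. [:- (\<alpha> ^ i), 1:])"
  have c0: "c \<noteq> 0" unfolding c_def S_def using pow_inj[OF a0 ordn] assms by auto
  have "degree (\<Prod>i\<in>S. [:- (\<alpha> ^ i), 1:]) \<le> sum (degree \<circ> (\<lambda>i. [:- (\<alpha> ^ i), 1:])) S"
    by (rule degree_prod_sum_le) (simp add: S_def)
  also have "\<dots> = card S" by simp
  also have "card S = n - 1" using assms by (simp add: S_def)
  finally have "degree L < n" unfolding L_def using n_pos[OF a0 ordn]
    by (meson degree_smult_le le_less_trans diff_less zero_less_one order_trans le_less_trans)
  moreover have "poly L (\<alpha> ^ i) = (if i = k then 1 else 0)" if "i < n" for i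
  proof (cases "i = k")
    case True thus ?thesis using c0 by (simp add: L_def poly_prod c_def)
  next
    case False
    hence "i \<in> S" using that by (simp add: S_def)
    hence "(\<Prod>j\<in>S. \<alpha> ^ i - \<alpha> ^ j) = 0" by (intro prod_zero) (auto simp: S_def)
    thus ?thesis using False by (simp add: L_def poly_prod)
  qed
  ultimately show ?thesis by (intro exI[of _ L]) (auto simp: A_carrier_iff[OF a0 ordn])
qed

lemma eps_prop:
  assumes "k < n"
  shows "eps n \<alpha> k \<in> A_carrier n" "i < n \<Longrightarrow> poly (eps n \<alpha> k) (\<alpha> ^ i) = (if i = k then 1 else 0)"
proof -
  have "\<exists>!e. e \<in> A_carrier n \<and> (\<forall>i<n. poly e (\<alpha> ^ i) = (if i = k then 1 else (0::'a)))"
  proof (rule ex_ex1I[OF eps_ex[OF assms]])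
    fix e e' assume h: "e \<in> A_carrier n \<and> (\<forall>i<n. poly e (\<alpha> ^ i) = (if i = k then 1 else (0::'a)))"
      "e' \<in> A_carrier n \<and> (\<forall>i<n. poly e' (\<alpha> ^ i) = (if i = k then 1 else (0::'a)))"
    show "e = e'" by (rule uniq[OF a0 ordn]) (use h in \<open>auto simp: A_carrier_iff[OF a0 ordn]\<close>)
  qed
  from theI'[OF this] show "eps n \<alpha> k \<in> A_carrier n" "i < n \<Longrightarrow> poly (eps n \<alpha> k) (\<alpha> ^ i) = (if i = k then 1 else 0)"
    unfolding eps_def by auto
qed

lemma poly_eps0: "poly (eps n \<alpha> 0) (\<alpha> ^ m) = (if m mod n = 0 then 1 else 0)"
  using eps_prop(2)[of 0 "m mod n"] n_pos[OF a0 ordn] pow_mod[OF a0 ordn, of m] by simp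

end



lemma coeff_zsum: "coeff (zsum \<delta>) k = (if k \<le> \<delta> then 1 else 0)"
  by (simp add: zsum_def coeff_sum coeff_monom)

lemma sum_delta_last: "(\<Sum>\<nu>\<le>(k::nat). if k - \<nu> = 0 then X \<nu> else 0) = X k"
proof -
  have "(\<Sum>\<nu>\<le>k. if k - \<nu> = 0 then X \<nu> else 0) = (\<Sum>\<nu>\<le>k. if \<nu> = k then X \<nu> else 0)"
  proof (intro sum.cong refl)
    fix \<nu> assume "\<nu> \<in> {..k}"
    hence "(k - \<nu> = 0) = (\<nu> = k)" by auto
    thus "(if k - \<nu> = 0 then X \<nu> else 0) = (if \<nu> = k then X \<nu> else 0)" by simp
  qed
  thus ?thesis by simp
qed

definition liftp :: "'a::field poly \<Rightarrow> 'a poly poly" where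
  "liftp u = map_poly (\<lambda>c. [:c:]) u"
definition phi :: "'a::field poly poly \<Rightarrow> 'a poly" where
  "phi f = map_poly (\<lambda>a. poly a 1) f"

lemma coeff_liftp: "coeff (liftp u) m = [:coeff u m:]"
  by (simp add: liftp_def coeff_map_poly)
lemma coeff_phi: "coeff (phi f) m = poly (coeff f m) 1"
  by (simp add: phi_def coeff_map_poly)

lemma coeff_pmap: "coeff (pmap n v) k = (\<Sum>i<n. monom (coeff (v i) k) i)"
proof -
  have "coeff (pmap n v) k = (\<Sum>i<n. \<Sum>\<nu>\<le>degree (v i). if \<nu> = k then monom (coeff (v i) \<nu>) i else 0)"
    by (simp add: pmap_def coeff_sum coeff_monom)
  also have "\<dots> = (\<Sum>i<n. monom (coeff (v i) k) i)"
    by (intro sum.cong refl) (auto simp: coeff_eq_0)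
  finally show ?thesis .
qed

context
  fixes \<alpha> :: "'a::{field,finite}" and n :: nat
  assumes a0: "\<alpha> \<noteq> 0" and ordn: "mult_ord \<alpha> = n"
begin

lemmas npos = n_pos[OF a0 ordn]
lemmas Acar = A_carrier_iff[OF a0 ordn]

lemma liftp_carrier: "liftp (u::'a poly) \<in> skew_carrier n"
  using npos by (simp add: skew_carrier_def coeff_liftp Acar)

lemma pmap_carrier: "pmap n (v::nat \<Rightarrow> 'a poly) \<in> skew_carrier n"
  by (auto simp: skew_carrier_def Acar coeff_pmap intro!: degree_sum_less npos le_less_trans[OF degree_monom_le])

lemma poly_pmap: "poly (coeff (pmap n v) k) y = (\<Sum>i<n. coeff (v i) k * y ^ i)"
  by (simp add: coeff_pmap poly_sum poly_monom)

abbreviation gg :: "nat \<Rightarrow> 'a poly poly" where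
  "gg \<delta> \<equiv> (\<Sum>\<nu>\<le>\<delta>. monom (\<Sum>i<n. monom (\<alpha> ^ (\<nu> * i)) i) \<nu>)"

lemma coeff_gg: "coeff (gg \<delta>) k = (if k \<le> \<delta> then (\<Sum>i<n. monom (\<alpha> ^ (k * i)) i) else 0)"
  by (simp add: coeff_sum coeff_monom)

lemma gg_carrier: "gg \<delta> \<in> skew_carrier n"
  by (auto simp: skew_carrier_def Acar coeff_gg intro!: degree_sum_less npos le_less_trans[OF degree_monom_le])

lemma pw: "\<alpha> ^ (k * i) * (\<alpha> ^ j) ^ i = (\<alpha> ^ (j + k)) ^ i"
proof -
  have "\<alpha> ^ (k * i) = (\<alpha> ^ k) ^ i" by (rule power_mult)
  thus ?thesis by (simp add: power_add power_mult_distrib mult.commute)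
qed

lemma poly_gg: "poly (coeff (gg \<delta>) k) (\<alpha> ^ j) = (if k \<le> \<delta> then (\<Sum>i<n. (\<alpha> ^ (j + k)) ^ i) else 0)"
  by (simp only: coeff_gg) (simp add: poly_sum poly_monom pw)

lemma gg_key: "\<alpha> ^ (j + \<nu>) \<noteq> 1 \<Longrightarrow> poly (coeff (gg \<delta>) \<nu>) (\<alpha> ^ j) = 0"
  by (simp add: poly_gg geom0[OF a0 ordn])

lemma conj1: "gg \<delta> = skew_mult n \<alpha> [: A_red n (\<Prod>i\<in>{1..<n}. [:- (\<alpha> ^ i), 1:]) :] (zsum \<delta>)"
proof (rule skew_eqI[OF a0 ordn gg_carrier skew_mult_carrier[OF a0 ordn]])
  fix k j assume "j < n"
  have "poly (coeff (skew_mult n \<alpha> [: A_red n (\<Prod>i\<in>{1..<n}. [:- (\<alpha> ^ i), 1:]) :] (zsum \<delta>)) k) (\<alpha> ^ j)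
     = (\<Sum>\<nu>\<le>k. if k - \<nu> = 0 then poly (A_red n (\<Prod>i\<in>{1..<n}. [:- (\<alpha> ^ i), 1:])) (\<alpha> ^ (j + \<nu>)) * poly (coeff (zsum \<delta>) \<nu>) (\<alpha> ^ j) else 0)"
    unfolding poly_coeff_skew_mult[OF a0 ordn] by (intro sum.cong refl) (auto simp: coeff_pCons split: nat.splits)
  also have "\<dots> = (if k \<le> \<delta> then (\<Sum>i<n. (\<alpha> ^ (j + k)) ^ i) else 0)"
    by (simp only: sum_delta_last) (simp add: poly_A_red[OF a0 ordn] poly_P[OF a0 ordn, simplified] coeff_zsum)
  finally show "poly (coeff (gg \<delta>) k) (\<alpha> ^ j) = poly (coeff (skew_mult n \<alpha> [: A_red n (\<Prod>i\<in>{1..<n}. [:- (\<alpha> ^ i), 1:]) :] (zsum \<delta>)) k) (\<alpha> ^ j)"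
    by (simp add: poly_gg)
qed

end



context
  fixes \<alpha> :: "'a::{field,finite}" and n :: nat
  assumes a0: "\<alpha> \<noteq> 0" and ordn: "mult_ord \<alpha> = n"
begin

lemma lift_eval:
  assumes "\<And>\<nu> j. \<alpha> ^ (j + \<nu>) \<noteq> 1 \<Longrightarrow> poly (coeff G \<nu>) (\<alpha> ^ j) = 0"
  shows "poly (coeff (skew_mult n \<alpha> (liftp u) G) k) (\<alpha> ^ j) = (\<Sum>\<nu>\<le>k. coeff u (k - \<nu>) * poly (coeff G \<nu>) (\<alpha> ^ j))"
  by (simp add: key[OF a0 ordn assms] coeff_liftp)

lemma phi_eq:
  assumes "\<And>\<nu> j. \<alpha> ^ (j + \<nu>) \<noteq> 1 \<Longrightarrow> poly (coeff G \<nu>) (\<alpha> ^ j) = 0"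
  shows "skew_mult n \<alpha> f G = skew_mult n \<alpha> (liftp (phi f)) G"
  by (rule skew_eqI[OF a0 ordn skew_mult_carrier[OF a0 ordn] skew_mult_carrier[OF a0 ordn]])
     (simp add: key[OF a0 ordn assms] coeff_phi coeff_liftp)

lemma pmap_code: "pmap n (\<lambda>i. if i < n then u * G_entry \<alpha> \<delta> i else 0) = skew_mult n \<alpha> (liftp u) (gg \<alpha> n \<delta>)"
proof (rule skew_eqI[OF a0 ordn pmap_carrier[OF a0 ordn] skew_mult_carrier[OF a0 ordn]])
  fix k j assume "j < n"
  define cG where "cG = (\<lambda>i \<nu>. if \<nu> \<le> \<delta> then \<alpha> ^ (\<nu> * i) else (0::'a))"
  have cGe: "coeff (G_entry \<alpha> \<delta> i) \<nu> = cG i \<nu>" for i \<nu>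
    by (simp add: G_entry_def coeff_sum coeff_monom cG_def)
  have "poly (coeff (pmap n (\<lambda>i. if i < n then u * G_entry \<alpha> \<delta> i else 0)) k) (\<alpha> ^ j)
      = (\<Sum>i<n. (\<Sum>\<nu>\<le>k. cG i \<nu> * coeff u (k - \<nu>)) * (\<alpha> ^ j) ^ i)"
    unfolding poly_pmap[OF a0 ordn] by (intro sum.cong refl) (simp add: mult.commute[of u] coeff_mult cGe)
  also have "\<dots> = (\<Sum>i<n. \<Sum>\<nu>\<le>k. coeff u (k - \<nu>) * (cG i \<nu> * (\<alpha> ^ j) ^ i))"
    by (simp add: sum_distrib_left sum_distrib_right mult_ac)
  also have "\<dots> = (\<Sum>\<nu>\<le>k. \<Sum>i<n. coeff u (k - \<nu>) * (cG i \<nu> * (\<alpha> ^ j) ^ i))"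
    by (rule sum.swap)
  also have "\<dots> = (\<Sum>\<nu>\<le>k. coeff u (k - \<nu>) * poly (coeff (gg \<alpha> n \<delta>) \<nu>) (\<alpha> ^ j))"
    unfolding poly_gg[OF a0 ordn]
  proof (intro sum.cong refl)
    fix x assume "x \<in> {..k}"
    show "(\<Sum>i<n. coeff u (k - x) * (cG i x * (\<alpha> ^ j) ^ i)) =
      coeff u (k - x) * (if x \<le> \<delta> then \<Sum>i<n. (\<alpha> ^ (j + x)) ^ i else 0)"
      by (cases "x \<le> \<delta>") (simp_all add: cG_def sum_distrib_left pw[OF a0 ordn, symmetric] mult_ac)
  qed
  finally show "poly (coeff (pmap n (\<lambda>i. if i < n then u * G_entry \<alpha> \<delta> i else 0)) k) (\<alpha> ^ j) =
    poly (coeff (skew_mult n \<alpha> (liftp u) (gg \<alpha> n \<delta>)) k) (\<alpha> ^ j)"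
    by (simp add: lift_eval[OF gg_key[OF a0 ordn]])
qed

lemma conj2: "pmap n ` code_C n \<alpha> \<delta> = skew_left_ideal n \<alpha> (gg \<alpha> n \<delta>)"
proof
  show "pmap n ` code_C n \<alpha> \<delta> \<subseteq> skew_left_ideal n \<alpha> (gg \<alpha> n \<delta>)"
    unfolding code_C_def skew_left_ideal_def using pmap_code liftp_carrier[OF a0 ordn] by blast
  show "skew_left_ideal n \<alpha> (gg \<alpha> n \<delta>) \<subseteq> pmap n ` code_C n \<alpha> \<delta>"
  proof
    fix x assume "x \<in> skew_left_ideal n \<alpha> (gg \<alpha> n \<delta>)"
    then obtain f where x: "x = skew_mult n \<alpha> f (gg \<alpha> n \<delta>)" unfolding skew_left_ideal_def by blast
    hence "x = pmap n (\<lambda>i. if i < n then phi f * G_entry \<alpha> \<delta> i else 0)"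
      using phi_eq[OF gg_key[OF a0 ordn]] pmap_code by metis
    thus "x \<in> pmap n ` code_C n \<alpha> \<delta>" unfolding code_C_def by blast
  qed
qed

abbreviation hh :: "nat \<Rightarrow> 'a poly poly" where
  "hh \<delta> \<equiv> skew_mult n \<alpha> [: eps n \<alpha> 0 :] (zsum \<delta>)"

lemma poly_hh: "poly (coeff (hh \<delta>) k) (\<alpha> ^ j) = (if k \<le> \<delta> \<and> (j + k) mod n = 0 then 1 else 0)"
proof -
  have "poly (coeff (hh \<delta>) k) (\<alpha> ^ j)
     = (\<Sum>\<nu>\<le>k. if k - \<nu> = 0 then poly (eps n \<alpha> 0) (\<alpha> ^ (j + \<nu>)) * poly (coeff (zsum \<delta>) \<nu>) (\<alpha> ^ j) else 0)"
    unfolding poly_coeff_skew_mult[OF a0 ordn] by (intro sum.cong refl) (auto simp: coeff_pCons split: nat.splits)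
  also have "\<dots> = (if k \<le> \<delta> \<and> (j + k) mod n = 0 then 1 else 0)"
    by (simp only: sum_delta_last) (simp add: poly_eps0[OF a0 ordn] coeff_zsum)
  finally show ?thesis .
qed

lemma hh_key: "\<alpha> ^ (j + \<nu>) \<noteq> 1 \<Longrightarrow> poly (coeff (hh \<delta>) \<nu>) (\<alpha> ^ j) = 0"
  by (simp add: poly_hh pow_eq1_iff[OF a0 ordn])

lemma gg_hh: "poly (coeff (gg \<alpha> n \<delta>) \<nu>) (\<alpha> ^ j) = (\<Sum>i<n. (1::'a) ^ i) * poly (coeff (hh \<delta>) \<nu>) (\<alpha> ^ j)"
  using geom0[OF a0 ordn, of "j + \<nu>"] pow_eq1_iff[OF a0 ordn, of "j + \<nu>"]
  by (auto simp: poly_gg[OF a0 ordn] poly_hh simp del: power_one)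

lemma conj4: "skew_left_ideal n \<alpha> (hh \<delta>) = skew_left_ideal n \<alpha> (gg \<alpha> n \<delta>)"
proof -
  define c where "c = (of_nat n :: 'a)"
  have c0: "c \<noteq> 0" unfolding c_def using geom1[OF a0 ordn] by simp
  have ci: "of_nat n * (inverse (of_nat n) * x) = (x::'a)" for x
    using c0 unfolding c_def by (simp add: mult.assoc[symmetric])
  have e1: "skew_mult n \<alpha> (liftp u) (gg \<alpha> n \<delta>) = skew_mult n \<alpha> (liftp (smult c u)) (hh \<delta>)" for u
    by (rule skew_eqI[OF a0 ordn skew_mult_carrier[OF a0 ordn] skew_mult_carrier[OF a0 ordn]])
       (simp add: lift_eval[OF gg_key[OF a0 ordn]] lift_eval[OF hh_key] gg_hh c_def sum_distrib_left mult_ac)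
  have e2: "skew_mult n \<alpha> (liftp u) (hh \<delta>) = skew_mult n \<alpha> (liftp (smult (inverse c) u)) (gg \<alpha> n \<delta>)" for u
    by (rule skew_eqI[OF a0 ordn skew_mult_carrier[OF a0 ordn] skew_mult_carrier[OF a0 ordn]])
       (simp add: lift_eval[OF gg_key[OF a0 ordn]] lift_eval[OF hh_key] gg_hh c_def sum_distrib_left mult_ac ci)
  show ?thesis
  proof
    show "skew_left_ideal n \<alpha> (hh \<delta>) \<subseteq> skew_left_ideal n \<alpha> (gg \<alpha> n \<delta>)"
    proof -
      have p2: "skew_mult n \<alpha> f (hh \<delta>) = skew_mult n \<alpha> (liftp (phi f)) (hh \<delta>)" for f
        by (rule phi_eq) (rule hh_key)
      show ?thesis
      proof
        fix x assume "x \<in> skew_left_ideal n \<alpha> (hh \<delta>)"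
        then obtain f where "x = skew_mult n \<alpha> f (hh \<delta>)" unfolding skew_left_ideal_def by blast
        hence "x = skew_mult n \<alpha> (liftp (smult (inverse c) (phi f))) (gg \<alpha> n \<delta>)" using p2 e2 by simp
        thus "x \<in> skew_left_ideal n \<alpha> (gg \<alpha> n \<delta>)"
          unfolding skew_left_ideal_def using liftp_carrier[OF a0 ordn] by blast
      qed
    qed
    show "skew_left_ideal n \<alpha> (gg \<alpha> n \<delta>) \<subseteq> skew_left_ideal n \<alpha> (hh \<delta>)"
    proof -
      have p2: "skew_mult n \<alpha> f (gg \<alpha> n \<delta>) = skew_mult n \<alpha> (liftp (phi f)) (gg \<alpha> n \<delta>)" for f
        by (rule phi_eq) (rule gg_key[OF a0 ordn])
      show ?thesis
      proof
        fix x assume "x \<in> skew_left_ideal n \<alpha> (gg \<alpha> n \<delta>)"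
        then obtain f where "x = skew_mult n \<alpha> f (gg \<alpha> n \<delta>)" unfolding skew_left_ideal_def by blast
        hence "x = skew_mult n \<alpha> (liftp (smult c (phi f))) (hh \<delta>)" using p2 e1 by simp
        thus "x \<in> skew_left_ideal n \<alpha> (hh \<delta>)"
          unfolding skew_left_ideal_def using liftp_carrier[OF a0 ordn] by blast
      qed
    qed
  qed
qed

end



lemma sum_two: "(\<And>\<nu>::nat. \<nu> \<ge> 2 \<Longrightarrow> T \<nu> = 0) \<Longrightarrow> (\<Sum>\<nu>\<le>(k::nat). T \<nu>) = T 0 + (if k \<ge> 1 then T 1 else (0::'a::comm_monoid_add))"
proof -
  assume z: "\<And>\<nu>. \<nu> \<ge> 2 \<Longrightarrow> T \<nu> = 0"
  have "(\<Sum>\<nu>\<le>k. T \<nu>) = (\<Sum>\<nu>\<in>{..k} \<inter> {..1}. T \<nu>)"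
    by (rule sum.mono_neutral_right) (auto intro: z)
  moreover have "{..k} \<inter> {..1} = (if k \<ge> 1 then {0, 1} else {0::nat})" by auto
  ultimately show ?thesis by auto
qed

lemma mod_small: "x < 2 * n \<Longrightarrow> (x mod n = 0) = (x = 0 \<or> x = (n::nat))"
  by (cases "x < n") (auto simp: le_mod_geq)

context
  fixes \<alpha> :: "'a::{field,finite}" and n :: nat
  assumes a0: "\<alpha> \<noteq> 0" and ordn: "mult_ord \<alpha> = n"
begin

lemma step:
  assumes "Suc (Suc d) \<le> n"
  shows "skew_mult n \<alpha> (hh \<alpha> n d) [: 1, eps n \<alpha> (n - Suc d) :] = hh \<alpha> n (Suc d)"
proof (rule skew_eqI[OF a0 ordn skew_mult_carrier[OF a0 ordn] skew_mult_carrier[OF a0 ordn]])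
  fix k j assume j: "j < n"
  have ep: "poly (eps n \<alpha> (n - Suc d)) (\<alpha> ^ j) = (if j = n - Suc d then 1 else 0)"
    using eps_prop(2)[OF a0 ordn, of "n - Suc d" j] j assms by auto
  have "poly (coeff (skew_mult n \<alpha> (hh \<alpha> n d) [: 1, eps n \<alpha> (n - Suc d) :]) k) (\<alpha> ^ j)
     = poly (coeff (hh \<alpha> n d) k) (\<alpha> ^ j) + (if k \<ge> 1 then poly (coeff (hh \<alpha> n d) (k - 1)) (\<alpha> ^ (j + 1)) * poly (eps n \<alpha> (n - Suc d)) (\<alpha> ^ j) else 0)"
    unfolding poly_coeff_skew_mult[OF a0 ordn]
    by (subst sum_two) (auto simp: coeff_pCons split: nat.splits)
  also have "\<dots> = (if k \<le> Suc d \<and> (j + k) mod n = 0 then 1 else 0)"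
    unfolding poly_hh[OF a0 ordn] ep
    using j assms mod_small[of "j + k" n] mod_small[of "j + 1 + (k - 1)" n]
    by (cases "k = 0") (auto split: if_splits)
  finally show "poly (coeff (skew_mult n \<alpha> (hh \<alpha> n d) [: 1, eps n \<alpha> (n - Suc d) :]) k) (\<alpha> ^ j) =
     poly (coeff (hh \<alpha> n (Suc d)) k) (\<alpha> ^ j)"
    by (simp add: poly_hh[OF a0 ordn])
qed

lemma conj3: "d \<le> n - 1 \<Longrightarrow>
  hh \<alpha> n d = foldl (skew_mult n \<alpha>) [: eps n \<alpha> 0 :] (map (\<lambda>j. [: 1, eps n \<alpha> (n - j) :]) [1..<d+1])"
proof (induction d)
  case 0
  have "[: eps n \<alpha> 0 :] \<in> skew_carrier n"
    using eps_prop(1)[OF a0 ordn, of 0] n_pos[OF a0 ordn]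
    by (auto simp: skew_carrier_def coeff_pCons A_carrier_iff[OF a0 ordn] split: nat.splits)
  moreover have "poly (coeff (hh \<alpha> n 0) k) (\<alpha> ^ j) = poly (coeff [: eps n \<alpha> 0 :] k) (\<alpha> ^ j)" if "j < n" for k j
    using that by (auto simp: poly_hh[OF a0 ordn] poly_eps0[OF a0 ordn] coeff_pCons split: nat.splits)
  ultimately show ?case
    by (simp add: skew_eqI[OF a0 ordn skew_mult_carrier[OF a0 ordn]])
next
  case (Suc d)
  have "[1..<Suc d + 1] = [1..<d+1] @ [Suc d]" by simp
  hence "foldl (skew_mult n \<alpha>) [: eps n \<alpha> 0 :] (map (\<lambda>j. [: 1, eps n \<alpha> (n - j) :]) [1..<Suc d+1])
     = skew_mult n \<alpha> (hh \<alpha> n d) [: 1, eps n \<alpha> (n - Suc d) :]"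
    using Suc by simp
  also have "\<dots> = hh \<alpha> n (Suc d)" using Suc.prems by (intro step) auto
  finally show ?case by simp
qed

end

theorem theorem4p6:
  fixes \<alpha> :: "'a::{field, finite}" and n \<delta> :: nat
  assumes "\<alpha> \<noteq> 0" and "mult_ord \<alpha> = n" and "\<delta> \<le> n - 1"
  shows
    "(\<Sum>\<nu>\<le>\<delta>. monom (\<Sum>i<n. monom (\<alpha> ^ (\<nu> * i)) i) \<nu>)
       = skew_mult n \<alpha> [: A_red n (\<Prod>i\<in>{1..<n}. [:- (\<alpha> ^ i), 1:]) :] (zsum \<delta>)
     \<and> pmap n ` code_C n \<alpha> \<delta>
       = skew_left_ideal n \<alpha> (\<Sum>\<nu>\<le>\<delta>. monom (\<Sum>i<n. monom (\<alpha> ^ (\<nu> * i)) i) \<nu>)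
     \<and> skew_mult n \<alpha> [: eps n \<alpha> 0 :] (zsum \<delta>)
       = foldl (skew_mult n \<alpha>) [: eps n \<alpha> 0 :] (map (\<lambda>j. [: 1, eps n \<alpha> (n - j) :]) [1..<\<delta>+1])
     \<and> pmap n ` code_C n \<alpha> \<delta>
       = skew_left_ideal n \<alpha> (skew_mult n \<alpha> [: eps n \<alpha> 0 :] (zsum \<delta>))"
  using conj1[OF assms(1,2), of \<delta>] conj2[OF assms(1,2), of \<delta>]
    conj3[OF assms(1,2) assms(3)] conj4[OF assms(1,2), of \<delta>]
  by simp

end
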